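(* Let $G$ be a probability distribution on $\mathbb{R}$ (with finite second moment), let $\mu\sim G$ and $Z\sim N(0,1)$ be independent, and let $r(\tau, G) = \mathbb{E}_{\mu, Z} [(\eta(\mu+Z ; \tau) -\mu)^2]$ for $\tau\ge0$, where $\eta(a;\tau)=(|a|-\tau)_+\mathrm{sign}(a)$. Then \[ \frac{\partial r(\tau, G)}{\partial \tau}\Big|_{\tau=0}<0 . \] *)

theory Defs
  imports "HOL-Probability.Probability"
begin

definition soft_thresh :: "real \<Rightarrow> real \<Rightarrow> real" where
  "soft_thresh a \<tau> = max (\<bar>a\<bar> - \<tau>) 0 * sgn a"

definition risk :: "real \<Rightarrow> real measure \<Rightarrow> real" where
  "risk \<tau> G = (\<integral>(\<mu>, z). (soft_thresh (\<mu> + z) \<tau> - \<mu>)\<^sup>2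
                 \<partial>(G \<Otimes>\<^sub>M density lborel std_normal_density))"

end

theory Submission
  imports Defs
begin

lemma st_zero: "soft_thresh y 0 = y"
  by (simp add: soft_thresh_def max_def sgn_if abs_if)

lemma st_gt: "\<tau> < \<bar>y\<bar> \<Longrightarrow> soft_thresh y \<tau> = y - \<tau> * sgn y"
  by (simp add: soft_thresh_def max_def sgn_if abs_if algebra_simps)

lemma st_le: "\<bar>y\<bar> \<le> \<tau> \<Longrightarrow> soft_thresh y \<tau> = 0"
  by (simp add: soft_thresh_def max_def)

definition Q :: "real \<Rightarrow> real \<times> real \<Rightarrow> real" where
  "Q \<tau> p = ((soft_thresh (fst p + snd p) \<tau> - fst p)\<^sup>2 - (soft_thresh (fst p + snd p) 0 - fst p)\<^sup>2) / \<tau>"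

lemma Q_bound:
  assumes "0 < \<tau>"
  shows "\<bar>Q \<tau> (m, z)\<bar> \<le> 2 * \<bar>z\<bar> + \<bar>m\<bar> + \<tau>"
proof (cases "\<tau> < \<bar>m + z\<bar>")
  case True
  then have s: "(sgn (m+z))\<^sup>2 = 1" using assms by (auto simp: sgn_if)
  have "Q \<tau> (m, z) = ((z - \<tau> * sgn (m+z))\<^sup>2 - z\<^sup>2) / \<tau>"
    using True by (simp add: Q_def st_gt st_zero algebra_simps)
  also have "\<dots> = \<tau> - 2 * z * sgn (m+z)"
    using assms s by (simp add: power2_eq_square field_simps)
  finally have e: "Q \<tau> (m, z) = \<tau> - 2 * z * sgn (m+z)" .
  have "\<bar>2 * z * sgn (m+z)\<bar> \<le> 2 * \<bar>z\<bar>"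
    by (simp add: abs_mult sgn_if)
  then show ?thesis unfolding e using assms by linarith
next
  case False
  then have "Q \<tau> (m, z) = (m - z) * (m + z) / \<tau>"
    by (simp add: Q_def st_le st_zero power2_eq_square algebra_simps)
  also have "\<bar>\<dots>\<bar> = \<bar>m - z\<bar> * (\<bar>m + z\<bar> / \<tau>)"
    using assms by (simp add: abs_mult)
  also have "\<dots> \<le> \<bar>m - z\<bar> * 1"
    using False assms by (intro mult_left_mono) auto
  finally show ?thesis using assms by auto
qed

lemma Q_eventually:
  assumes "0 < \<tau>" "\<tau> < \<bar>m + z\<bar> \<or> m + z = 0"
  shows "Q \<tau> (m, z) = - 2 * z * sgn (m + z) + (if m + z = 0 then 0 else \<tau>)"
  using assms
proof (cases "m + z = 0")
  case True
  then show ?thesis using assms by (simp add: Q_def st_le st_zero)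
next
  case False
  then have s: "(sgn (m+z))\<^sup>2 = 1" using assms by (auto simp: sgn_if)
  have "Q \<tau> (m, z) = ((z - \<tau> * sgn (m+z))\<^sup>2 - z\<^sup>2) / \<tau>"
    using False assms by (simp add: Q_def st_gt st_zero algebra_simps)
  also have "\<dots> = \<tau> - 2 * z * sgn (m+z)"
    using assms s by (simp add: power2_eq_square field_simps)
  finally show ?thesis using False by simp
qed

lemma w_nonneg: "0 \<le> z * (sgn (m + z) - sgn (m::real))"
  by (cases "m < 0"; cases "m = 0"; cases "m + z < 0"; cases "m + z = 0")
     (auto simp: sgn_if mult_nonpos_nonpos)

lemma w_pos: "\<exists>a. \<forall>z. a < z \<and> z < a + 1 \<longrightarrow> 0 < z * (sgn (m + z) - sgn (m::real))"
proof (cases "m < 0")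
  case True
  show ?thesis
    by (rule exI[of _ "- m + 1"]) (use True in \<open>auto simp: sgn_if\<close>)
next
  case False
  show ?thesis
  proof (rule exI[of _ "- m - 2"], intro allI impI)
    fix z :: real assume z: "- m - 2 < z \<and> z < - m - 2 + 1"
    then have "z < 0" "m + z < 0" using False by auto
    then show "0 < z * (sgn (m + z) - sgn m)"
      using False by (auto simp: sgn_if mult_neg_neg)
  qed
qed

lemma intN_abs: "integrable (density lborel std_normal_density) (\<lambda>z. \<bar>z\<bar>)"
  using integrable_std_normal_moment_abs[of 1]
  by (subst integrable_density) auto

lemma intN_sq: "integrable (density lborel std_normal_density) (\<lambda>z. z\<^sup>2)"
  using integrable_std_normal_moment[of 2]
  by (subst integrable_density) auto

lemma intN_id: "integrable (density lborel std_normal_density) (\<lambda>z. z)"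
  using integrable_std_normal_moment[of 1]
  by (subst integrable_density) auto

lemma integralN_id: "(\<integral>z. z \<partial>density lborel std_normal_density) = 0"
  using integral_std_normal_moment_odd[of 0]
  by (subst integral_density) auto

lemma inner_pos: "0 < (\<integral>z. z * sgn (m + z) \<partial>density lborel std_normal_density)"
proof -
  define N where "N = density lborel std_normal_density"
  define w where "w z = z * (sgn (m + z) - sgn m)" for z
  have intw: "integrable N w"
    unfolding w_def N_def
    by (rule Bochner_Integration.integrable_bound[OF integrable_mult_left[OF intN_abs, of 2]])
       (auto simp: abs_mult sgn_if)
  have eq: "(\<integral>z. z * sgn (m + z) \<partial>N) = (\<integral>z. w z + sgn m * z \<partial>N)"
    by (simp add: w_def algebra_simps)
  also have "\<dots> = (\<integral>z. w z \<partial>N) + sgn m * (\<integral>z. z \<partial>N)"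
    using intw intN_id unfolding N_def by simp
  also have "\<dots> = (\<integral>z. w z \<partial>N)"
    using integralN_id unfolding N_def by simp
  finally have e: "(\<integral>z. z * sgn (m + z) \<partial>N) = (\<integral>z. w z \<partial>N)" .
  have nn: "0 \<le> (\<integral>z. w z \<partial>N)"
    by (rule integral_nonneg_AE) (simp add: w_def w_nonneg)
  have "(\<integral>z. w z \<partial>N) \<noteq> 0"
  proof
    assume z0: "(\<integral>z. w z \<partial>N) = 0"
    have "AE z in N. 0 \<le> w z" by (simp add: w_def w_nonneg)
    from integral_nonneg_eq_0_iff_AE[OF intw this] z0
    have "AE z in N. w z = 0" by simp
    then have "AE z in lborel. 0 < std_normal_density z \<longrightarrow> w z = 0"
      unfolding N_def by (subst (asm) AE_density) auto
    then have ae: "AE z in lborel. w z = 0"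
      by (rule AE_mp) (auto simp: normal_density_pos)
    obtain a where a: "\<And>z. a < z \<Longrightarrow> z < a + 1 \<Longrightarrow> 0 < w z"
      using w_pos[of m] unfolding w_def by blast
    from ae obtain Z where Z: "{x \<in> space lborel. \<not> w x = 0} \<subseteq> Z" "emeasure lborel Z = 0"
      "Z \<in> sets lborel" by (rule AE_E)
    have "{a<..<a+1} \<subseteq> Z" using Z(1) a by fastforce
    then have "emeasure lborel {a<..<a+1} \<le> emeasure lborel Z"
      by (rule emeasure_mono) (rule Z(3))
    then show False using Z(2) by simp
  qed
  with nn e show ?thesis unfolding N_def by simp
qed

lemma F_bound:
  assumes "0 \<le> \<tau>"
  shows "(soft_thresh (m + z) \<tau> - m)\<^sup>2 \<le> 3 * (m\<^sup>2 + z\<^sup>2 + \<tau>\<^sup>2)"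
proof -
  have a: "\<bar>soft_thresh (m + z) \<tau> - m\<bar> \<le> \<bar>z\<bar> + \<bar>m\<bar> + \<tau>"
  proof (cases "\<tau> < \<bar>m + z\<bar>")
    case True
    then have "soft_thresh (m + z) \<tau> - m = z - \<tau> * sgn (m + z)" by (simp add: st_gt)
    moreover have "\<bar>\<tau> * sgn (m + z)\<bar> \<le> \<tau>" using assms by (simp add: abs_mult sgn_if)
    ultimately show ?thesis by linarith
  next
    case False
    then show ?thesis using assms by (simp add: st_le)
  qed
  have "(soft_thresh (m + z) \<tau> - m)\<^sup>2 \<le> (\<bar>z\<bar> + \<bar>m\<bar> + \<tau>)\<^sup>2"
    using a by (metis abs_ge_zero power2_abs power_mono)
  also have "\<dots> \<le> 3 * (m\<^sup>2 + z\<^sup>2 + \<tau>\<^sup>2)"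
  proof -
    have h: "0 \<le> (\<bar>z\<bar>-\<bar>m\<bar>)\<^sup>2 + (\<bar>m\<bar>-\<tau>)\<^sup>2 + (\<bar>z\<bar>-\<tau>)\<^sup>2" by simp
    have e1: "\<bar>z\<bar> * \<bar>z\<bar> = z * z" "\<bar>m\<bar> * \<bar>m\<bar> = m * m" by (simp_all add: abs_mult_self_eq)
    show ?thesis using h unfolding power2_eq_square by (simp add: algebra_simps e1)
  qed
  finally show ?thesis .
qed

theorem lemma6:
  fixes G :: "real measure"
  assumes "prob_space G"
    and "sets G = sets borel"
    and "integrable G (\<lambda>x. x\<^sup>2)"
  shows "\<exists>D. ((\<lambda>\<tau>. risk \<tau> G) has_real_derivative D) (at 0 within {0..}) \<and> D < 0"
proof -
  interpret G: prob_space G by fact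
  define N where "N = density lborel std_normal_density"
  interpret N: prob_space N unfolding N_def by (rule prob_space_normal_density) simp
  interpret GN: pair_prob_space G N ..
  interpret NG: pair_prob_space N G ..
  define M where "M = G \<Otimes>\<^sub>M N"
  have sG[measurable_cong]: "sets G = sets borel" by fact
  have sN[measurable_cong]: "sets N = sets borel" by (simp add: N_def)
  have sM: "sets M = sets (borel \<Otimes>\<^sub>M borel)"
    unfolding M_def by (rule sets_pair_measure_cong[OF sG sN])
  have meas: "f \<in> borel_measurable M" if "f \<in> borel_measurable (borel \<Otimes>\<^sub>M borel)" for f :: "real \<times> real \<Rightarrow> real"
    using that measurable_cong_sets[OF sM refl, of "borel::real measure"] by simp
  have intG_abs: "integrable G (\<lambda>x. \<bar>x\<bar>)"
  proof (rule Bochner_Integration.integrable_bound[OF Bochner_Integration.integrable_add[OF G.integrable_const[of 1] assms(3)]])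
    show "(\<lambda>x. \<bar>x\<bar>) \<in> borel_measurable G" by measurable
    show "AE x in G. norm \<bar>x\<bar> \<le> norm (1 + x\<^sup>2)"
    proof (rule AE_I2)
      fix x :: real
      have "\<bar>x\<bar> \<le> 1 + x\<^sup>2"
      proof (cases "\<bar>x\<bar> \<le> 1")
        case True
        have "0 \<le> x\<^sup>2" by simp
        then show ?thesis using True by linarith
      next
        case False
        then have "\<bar>x\<bar> * 1 \<le> \<bar>x\<bar> * \<bar>x\<bar>" by (intro mult_left_mono) auto
        also have "\<dots> = x\<^sup>2" by (simp add: power2_eq_square abs_mult_self_eq)
        finally show ?thesis by simp
      qed
      then show "norm \<bar>x\<bar> \<le> norm (1 + x\<^sup>2)" by simp
    qed
  qed
  have fstI: "integrable M (\<lambda>p. f (fst p))" if "integrable G f" "f \<in> borel_measurable borel" for f :: "real \<Rightarrow> real"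
  proof -
    have "integrable (distr M G fst) f" unfolding M_def N.distr_pair_fst using that(1) .
    moreover have "f \<in> borel_measurable G"
      using that(2) measurable_cong_sets[OF sG refl, of "borel::real measure"] by simp
    ultimately show ?thesis
      using integrable_distr_eq[of fst M G f] unfolding M_def by simp
  qed
  have sndI: "integrable M (\<lambda>p. f (snd p))" if "integrable N f" "f \<in> borel_measurable borel" for f :: "real \<Rightarrow> real"
  proof -
    have "integrable (distr (N \<Otimes>\<^sub>M G) N fst) f" unfolding G.distr_pair_fst using that(1) .
    moreover have "f \<in> borel_measurable N"
      using that(2) measurable_cong_sets[OF sN refl, of "borel::real measure"] by simp
    ultimately have "integrable (N \<Otimes>\<^sub>M G) (\<lambda>p. f (fst p))"
      using integrable_distr_eq[of fst "N \<Otimes>\<^sub>M G" N f] by simp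
    from NG.integrable_product_swap[OF this] show ?thesis
      unfolding M_def by (simp add: split_beta')
  qed
  have i1: "integrable M (\<lambda>p. (fst p)\<^sup>2)" by (rule fstI[OF assms(3)]) measurable
  have i2: "integrable M (\<lambda>p. (snd p)\<^sup>2)" by (rule sndI) (simp_all add: N_def intN_sq)
  have i3: "integrable M (\<lambda>p. \<bar>fst p\<bar>)" by (rule fstI[OF intG_abs]) measurable
  have i4: "integrable M (\<lambda>p. \<bar>snd p\<bar>)" by (rule sndI) (simp_all add: N_def intN_abs)
  have ic: "integrable M (\<lambda>p. c)" for c :: real unfolding M_def by (rule GN.integrable_const)
  define F where "F \<tau> = (\<lambda>(m::real,z::real). (soft_thresh (m+z) \<tau> - m)\<^sup>2)" for \<tau>
  have riskF: "risk \<tau> G = integral\<^sup>L M (F \<tau>)" for \<tau>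
    unfolding risk_def F_def M_def N_def ..
  have measF: "F \<tau> \<in> borel_measurable M" for \<tau>
    unfolding F_def soft_thresh_def by (intro meas) measurable
  have intF: "integrable M (F \<tau>)" if "0 \<le> \<tau>" for \<tau>
  proof (rule Bochner_Integration.integrable_bound[OF _ measF])
    show "integrable M (\<lambda>p. 3 * ((fst p)\<^sup>2 + (snd p)\<^sup>2 + \<tau>\<^sup>2))"
      using i1 i2 ic by auto
    show "AE p in M. norm (F \<tau> p) \<le> norm (3 * ((fst p)\<^sup>2 + (snd p)\<^sup>2 + \<tau>\<^sup>2))"
    proof (rule AE_I2)
      fix p :: "real \<times> real"
      obtain m z where p: "p = (m, z)" by (cases p)
      show "norm (F \<tau> p) \<le> norm (3 * ((fst p)\<^sup>2 + (snd p)\<^sup>2 + \<tau>\<^sup>2))"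
        using F_bound[OF that, of m z] by (simp add: p F_def)
    qed
  qed
  define L where "L = (\<lambda>p::real\<times>real. - 2 * (snd p * sgn (fst p + snd p)))"
  have Qeq: "(risk \<tau> G - risk 0 G) / (\<tau> - 0) = integral\<^sup>L M (Q \<tau>)" if "0 \<le> \<tau>" for \<tau>
  proof -
    have "(risk \<tau> G - risk 0 G) / (\<tau> - 0) = integral\<^sup>L M (\<lambda>p. F \<tau> p - F 0 p) / \<tau>"
      using intF[OF that] intF[of 0] by (simp add: riskF)
    also have "\<dots> = integral\<^sup>L M (\<lambda>p. (F \<tau> p - F 0 p) / \<tau>)" by simp
    also have "\<dots> = integral\<^sup>L M (Q \<tau>)"
      by (rule Bochner_Integration.integral_cong) (auto simp: F_def Q_def case_prod_beta)
    finally show ?thesis .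
  qed
  have lim: "((\<lambda>\<tau>. (risk \<tau> G - risk 0 G) / (\<tau> - 0)) \<longlongrightarrow> integral\<^sup>L M L) (at 0 within {0..})"
    unfolding tendsto_at_iff_sequentially comp_def
  proof (intro allI impI)
    fix X :: "nat \<Rightarrow> real" assume X: "\<forall>i. X i \<in> {0..} - {0}" "X \<longlonglongrightarrow> 0"
    have Xpos: "0 < X i" for i
    proof -
      have "X i \<in> {0..} - {0}" using X(1) by blast
      then show ?thesis by auto
    qed
    obtain B where B: "\<And>i. norm (X i) \<le> B" using convergent_imp_Bseq[OF convergentI[OF X(2)]] by (metis BseqE real_norm_def)
    have "(\<lambda>i. integral\<^sup>L M (Q (X i))) \<longlonglongrightarrow> integral\<^sup>L M L"
    proof (rule integral_dominated_convergence[where w="\<lambda>p. 2*\<bar>snd p\<bar> + \<bar>fst p\<bar> + B"])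
      show "L \<in> borel_measurable M" unfolding L_def by (intro meas) measurable
      show "Q (X i) \<in> borel_measurable M" for i unfolding Q_def soft_thresh_def by (intro meas) measurable
      show "integrable M (\<lambda>p. 2*\<bar>snd p\<bar> + \<bar>fst p\<bar> + B)" using i3 i4 ic by auto
      show "AE p in M. (\<lambda>i. Q (X i) p) \<longlonglongrightarrow> L p"
      proof (rule AE_I2)
        fix p :: "real \<times> real"
        obtain m z where p: "p = (m, z)" by (cases p)
        show "(\<lambda>i. Q (X i) p) \<longlonglongrightarrow> L p"
        proof (cases "m + z = 0")
          case True
          then show ?thesis using Q_eventually[OF Xpos] by (simp add: p L_def)
        next
          case False
          have ev: "eventually (\<lambda>i. X i < \<bar>m+z\<bar>) sequentially"
            using order_tendstoD(2)[OF X(2)] False by simp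
          have "eventually (\<lambda>i. L p + X i = Q (X i) p) sequentially"
            using ev by (rule eventually_mono) (simp add: p L_def Q_eventually[OF Xpos] False)
          moreover have "(\<lambda>i. L p + X i) \<longlonglongrightarrow> L p" using tendsto_add[OF tendsto_const X(2)] by simp
          ultimately show ?thesis by (rule Lim_transform_eventually[rotated])
        qed
      qed
      show "AE p in M. norm (Q (X i) p) \<le> 2*\<bar>snd p\<bar> + \<bar>fst p\<bar> + B" for i
      proof (rule AE_I2)
        fix p :: "real \<times> real"
        obtain m z where p: "p = (m, z)" by (cases p)
        show "norm (Q (X i) p) \<le> 2*\<bar>snd p\<bar> + \<bar>fst p\<bar> + B"
          using Q_bound[OF Xpos[of i], of m z] B[of i] by (simp add: p)
      qed
    qed
    moreover have e: "(\<lambda>i. (risk (X i) G - risk 0 G) / (X i - 0)) = (\<lambda>i. integral\<^sup>L M (Q (X i)))"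
      by (rule ext) (rule Qeq[OF less_imp_le[OF Xpos]])
    ultimately show "(\<lambda>i. (risk (X i) G - risk 0 G) / (X i - 0)) \<longlonglongrightarrow> integral\<^sup>L M L"
      by simp
  qed
  have intL: "integrable M (\<lambda>p. snd p * sgn (fst p + snd p))"
  proof (rule Bochner_Integration.integrable_bound[OF i4])
    show "(\<lambda>p. snd p * sgn (fst p + snd p)) \<in> borel_measurable M" by (intro meas) measurable
    show "AE p in M. norm (snd p * sgn (fst p + snd p)) \<le> norm \<bar>snd p\<bar>"
      by (rule AE_I2) (simp add: abs_mult sgn_if)
  qed
  let ?I = "\<lambda>m. \<integral>z. z * sgn (m+z) \<partial>N"
  have fub: "integral\<^sup>L M (\<lambda>p. snd p * sgn (fst p + snd p)) = integral\<^sup>L G ?I"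
    using GN.integral_fst'[OF intL[unfolded M_def]] by (simp add: M_def)
  have intI: "integrable G ?I" using GN.integrable_fst'[OF intL[unfolded M_def]] by simp
  have Ipos: "0 < ?I m" for m using inner_pos[of m] by (simp add: N_def)
  have nn: "0 \<le> integral\<^sup>L G ?I" by (rule integral_nonneg_AE) (simp add: less_imp_le Ipos)
  have "integral\<^sup>L G ?I \<noteq> 0"
  proof
    assume z: "integral\<^sup>L G ?I = 0"
    have "AE m in G. 0 \<le> ?I m" by (simp add: less_imp_le Ipos)
    from integral_nonneg_eq_0_iff_AE[OF intI this] z have "AE m in G. ?I m = 0" by simp
    then have "AE m in G. False" by (rule AE_mp) (use Ipos in \<open>auto intro!: AE_I2 simp: less_le\<close>)
    then show False by (simp add: G.AE_False)
  qed
  with nn have pos: "0 < integral\<^sup>L G ?I" by simp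
  have DL: "integral\<^sup>L M L = - 2 * integral\<^sup>L G ?I"
    unfolding L_def fub[symmetric] by simp
  show ?thesis
    by (rule exI[of _ "integral\<^sup>L M L"]) (use lim pos DL in \<open>simp add: has_field_derivative_iff\<close>)
qed

end
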